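(* Let $\{X_n\}$ be the Bessel-like walk of the context, $f_m=P_0(\tau_0=m)$ for $m\ge1$, and for even $0<m<n$ let $A_{m,n}=\frac{2}{n-m+2}\sum_{j=m}^nf_j$. Then for all even integers $0<k<m$, \[ f_m\le\frac{f_{m+k}+f_{m-k}}{2}\qquad\text{and}\qquad f_m\le A_{m-k,m+k}. \]
   Context: Let $\{X_n\}_{n\ge0}$ be a Markov chain on $\mathbb{Z}_+=\{0,1,2,\dots\}$ with steps $\pm1$, reflecting at $0$ (i.e. $p(0,1)=1$), and for $x\ge1$ transition probabilities $p_x=p(x,x+1)$, $q_x=p(x,x-1)=1-p_x$, where $p_x=\frac12\left(1-\frac{\delta}{2x}+\frac{R_x}{2}\right)$ for a fixed $\delta\ge-1$ and $R_x=o(1/x)$, and $p_x,q_x\in[\epsilon,1-\epsilon]$ for some $\epsilon>0$ and all $x\ge1$. $P_0$ is the law of the chain started at $0$, and $\tau_0=\min\{n\ge1:X_n=0\}$ is the first return time to $0$. *)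

theory Defs
  imports "HOL-Analysis.Analysis"
begin

definition step_prob :: "(nat \<Rightarrow> real) \<Rightarrow> nat \<Rightarrow> nat \<Rightarrow> real" where
  "step_prob p x y = (if y = Suc x then p x else if Suc y = x then 1 - p x else 0)"

text \<open>Paths of length m (m steps) from 0 back to 0 that do not visit 0 at times 1..m-1.
  Entries are bounded by m (automatic for nearest-neighbour paths from 0), so the set is finite.\<close>

definition return_paths :: "nat \<Rightarrow> nat list set" where
  "return_paths m = {xs. length xs = Suc m \<and> set xs \<subseteq> {0..m} \<and>
      xs ! 0 = 0 \<and> xs ! m = 0 \<and> (\<forall>i. 0 < i \<and> i < m \<longrightarrow> xs ! i \<noteq> 0)}"

definition first_return :: "(nat \<Rightarrow> real) \<Rightarrow> nat \<Rightarrow> real" where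
  "first_return p m = (\<Sum>xs\<in>return_paths m. \<Prod>i<m. step_prob p (xs ! i) (xs ! Suc i))"

definition A_avg :: "(nat \<Rightarrow> real) \<Rightarrow> nat \<Rightarrow> nat \<Rightarrow> real" where
  "A_avg p m n = 2 / (real n - real m + 2) * (\<Sum>j=m..n. first_return p j)"

end

theory Submission
  imports Defs
begin


definition Top :: "(nat \<Rightarrow> real) \<Rightarrow> (nat \<Rightarrow> real) \<Rightarrow> nat \<Rightarrow> real" where
"Top p u y = (if y = 0 then 0 else (if 2 \<le> y then u (y-1) * p (y-1) else 0) + u (y+1) * (1 - p (y+1)))"

fun pw :: "(nat \<Rightarrow> real) \<Rightarrow> nat \<Rightarrow> real" where
"pw p 0 = 1" | "pw p (Suc x) = (if x = 0 then 1 else pw p x * p x / (1 - p (Suc x)))"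

declare pw.simps(2) [simp del]
lemma pw1 [simp]: "pw p (Suc 0) = 1" by (simp add: pw.simps)

definition ip :: "(nat \<Rightarrow> real) \<Rightarrow> nat \<Rightarrow> (nat \<Rightarrow> real) \<Rightarrow> (nat \<Rightarrow> real) \<Rightarrow> real" where
 "ip p N u v = (\<Sum>y=1..N. u y * v y / pw p y)"

definition e1 :: "nat \<Rightarrow> real" where "e1 z = (if z = 1 then 1 else 0)"

definition supp :: "nat \<Rightarrow> (nat \<Rightarrow> real) \<Rightarrow> bool" where "supp s u = (\<forall>z>s. u z = 0)"

lemma pw_pos:
  assumes "\<forall>x\<ge>1. 0 < p x \<and> p x < 1" shows "pw p x > 0"
proof (induction x)
  case (Suc x) then show ?case using assms
    by (cases "x = 0") (auto intro!: divide_pos_pos mult_pos_pos simp: pw.simps)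
qed simp

lemma pw_rel:
  assumes "\<forall>x\<ge>1. 0 < p x \<and> p x < 1" "y \<ge> 1"
  shows "(1 - p (y+1)) / pw p y = p y / pw p (y+1)"
proof -
  have a: "pw p y > 0" using pw_pos assms(1) by blast
  have b: "p y > 0" "p (y+1) < 1" using assms by auto
  show ?thesis using assms(2) a b by (simp add: field_simps pw.simps)
qed

lemma term_eq:
  fixes u v :: "nat \<Rightarrow> real"
  assumes "\<forall>x\<ge>1. 0 < p x \<and> p x < 1" "y \<ge> 1"
  defines "G \<equiv> (\<lambda>z. p z / pw p (z+1) * (u z * v (z+1) - u (z+1) * v z))"
  shows "(Top p u y * v y - u y * Top p v y) / pw p y = (if 2 \<le> y then G (y-1) else 0) - G y"
proof -
  have a: "pw p y > 0" using pw_pos assms(1) by blast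
  have r: "(1 - p (y+1)) / pw p y = p y / pw p (y+1)" using pw_rel assms by blast
  have e: "(Top p u y * v y - u y * Top p v y) / pw p y =
     (if 2 \<le> y then p (y-1) / pw p y * (u (y-1) * v y - u y * v (y-1)) else 0)
     + (1 - p (y+1)) / pw p y * (u (y+1) * v y - u y * v (y+1))"
    using assms(2) a unfolding Top_def by (auto simp: field_simps)
  show ?thesis unfolding e r G_def using assms(2)
    by (cases "2 \<le> y") (simp_all add: algebra_simps)
qed

lemma telesc:
  assumes "\<forall>x\<ge>1. 0 < p x \<and> p x < 1" "N \<ge> 1"
  shows "(\<Sum>y=1..N. (Top p u y * v y - u y * Top p v y) / pw p y)
     = - (p N / pw p (N+1) * (u N * v (N+1) - u (N+1) * v N))"
  using assms(2)
proof (induction N rule: dec_induct)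
  case base
  then show ?case using term_eq[OF assms(1), of 1] by simp
next
  case (step n)
  have "(\<Sum>y=1..Suc n. (Top p u y * v y - u y * Top p v y) / pw p y)
      = (\<Sum>y=1..n. (Top p u y * v y - u y * Top p v y) / pw p y)
        + (Top p u (Suc n) * v (Suc n) - u (Suc n) * Top p v (Suc n)) / pw p (Suc n)"
    by simp
  also have "\<dots> = - (p (Suc n) / pw p (Suc n+1) * (u (Suc n) * v (Suc n+1) - u (Suc n+1) * v (Suc n)))"
    using term_eq[OF assms(1), of "Suc n" u v] step.IH step.hyps by simp
  finally show ?case by simp
qed

lemma selfadj:
  assumes "\<forall>x\<ge>1. 0 < p x \<and> p x < 1" "N \<ge> 1" "u (N+1) = 0" "v (N+1) = 0"
  shows "ip p N (Top p u) v = ip p N u (Top p v)"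
proof -
  have "ip p N (Top p u) v - ip p N u (Top p v) = (\<Sum>y=1..N. (Top p u y * v y - u y * Top p v y) / pw p y)"
    unfolding ip_def by (simp add: sum_subtractf diff_divide_distrib)
  also have "\<dots> = 0" unfolding telesc[OF assms(1,2)] using assms(3,4) by simp
  finally show ?thesis by simp
qed

lemma supp_Top: "supp s u \<Longrightarrow> supp (Suc s) (Top p u)"
  unfolding supp_def Top_def by auto

lemma supp_pow: "supp s u \<Longrightarrow> supp (s + n) ((Top p ^^ n) u)"
  by (induction n) (auto simp: supp_Top)

lemma ip_shift:
  assumes "\<forall>x\<ge>1. 0 < p x \<and> p x < 1" "supp s u" "supp s v" "s + a + b \<le> N" "N \<ge> 1"
  shows "ip p N ((Top p ^^ a) u) ((Top p ^^ b) v) = ip p N u ((Top p ^^ (a+b)) v)"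
  using assms(4)
proof (induction a arbitrary: b)
  case 0 then show ?case by simp
next
  case (Suc a)
  have s1: "((Top p ^^ a) u) (N+1) = 0" using supp_pow[OF assms(2), where p=p and n=a] Suc.prems
    unfolding supp_def by auto
  have s2: "((Top p ^^ b) v) (N+1) = 0" using supp_pow[OF assms(3), where p=p and n=b] Suc.prems
    unfolding supp_def by auto
  have "ip p N ((Top p ^^ Suc a) u) ((Top p ^^ b) v) = ip p N ((Top p ^^ a) u) (Top p ((Top p ^^ b) v))"
    using selfadj[OF assms(1,5), where u="(Top p ^^ a) u" and v="(Top p ^^ b) v", OF s1 s2] by simp
  also have "\<dots> = ip p N ((Top p ^^ a) u) ((Top p ^^ Suc b) v)" by simp
  also have "\<dots> = ip p N u ((Top p ^^ (a + Suc b)) v)" using Suc.IH[of "Suc b"] Suc.prems by simp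
  finally show ?case by simp
qed

lemma ip_e1: "N \<ge> 1 \<Longrightarrow> ip p N e1 w = w 1"
proof -
  assume N: "N \<ge> 1"
  have "ip p N e1 w = (\<Sum>y\<in>{1..N}. if y = 1 then w 1 / pw p 1 else 0)"
    unfolding ip_def e1_def by (rule sum.cong) auto
  also have "\<dots> = w 1" using N by simp
  finally show ?thesis .
qed

lemma g_ip:
  assumes "\<forall>x\<ge>1. 0 < p x \<and> p x < 1" "c + d + 1 \<le> N"
  shows "ip p N ((Top p ^^ c) e1) ((Top p ^^ d) e1) = (Top p ^^ (c+d)) e1 1"
proof -
  have s: "supp 1 e1" unfolding supp_def e1_def by auto
  show ?thesis using ip_shift[OF assms(1) s s, of c d N] assms(2) ip_e1[of N p] by (simp add: ac_simps)
qed

lemma ip_ineq: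
  assumes "\<forall>x\<ge>1. 0 < p x \<and> p x < 1"
  shows "2 * ip p N u v \<le> ip p N u u + ip p N v v"
proof -
  have "2 * ip p N u v = (\<Sum>y=1..N. 2 * (u y * v y) / pw p y)"
    unfolding ip_def by (simp add: sum_distrib_left)
  also have "\<dots> \<le> (\<Sum>y=1..N. (u y * u y + v y * v y) / pw p y)"
  proof (rule sum_mono)
    fix y assume "y \<in> {1..N}"
    then have "pw p y > 0" using pw_pos assms by blast
    moreover have "2 * (u y * v y) \<le> u y * u y + v y * v y"
      using sum_squares_bound[of "u y" "v y"] by (simp add: power2_eq_square)
    ultimately show "2 * (u y * v y) / pw p y \<le> (u y * u y + v y * v y) / pw p y"
      by (simp add: divide_right_mono)
  qed
  also have "\<dots> = ip p N u u + ip p N v v"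
    unfolding ip_def by (simp add: sum.distrib add_divide_distrib)
  finally show ?thesis .
qed

lemma g_conv:
  assumes "\<forall>x\<ge>1. 0 < p x \<and> p x < 1" "j \<le> a"
  shows "2 * (Top p ^^ (2*a)) e1 1 \<le> (Top p ^^ (2*a-2*j)) e1 1 + (Top p ^^ (2*a+2*j)) e1 1"
proof -
  define N where "N = 2*a+2*j+1"
  have 1: "ip p N ((Top p ^^ (a-j)) e1) ((Top p ^^ (a+j)) e1) = (Top p ^^ (2*a)) e1 1"
    using g_ip[OF assms(1), of "a-j" "a+j" N] assms(2) unfolding N_def by (simp add: mult_2 mult_2_right ac_simps)
  have 2: "ip p N ((Top p ^^ (a-j)) e1) ((Top p ^^ (a-j)) e1) = (Top p ^^ (2*a-2*j)) e1 1"
    using g_ip[OF assms(1), of "a-j" "a-j" N] assms(2) unfolding N_def by (simp add: mult_2 mult_2_right ac_simps)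
  have 3: "ip p N ((Top p ^^ (a+j)) e1) ((Top p ^^ (a+j)) e1) = (Top p ^^ (2*a+2*j)) e1 1"
    using g_ip[OF assms(1), of "a+j" "a+j" N] assms(2) unfolding N_def by (simp add: mult_2 mult_2_right ac_simps)
  show ?thesis using ip_ineq[OF assms(1), of N "(Top p ^^ (a-j)) e1" "(Top p ^^ (a+j)) e1"]
    unfolding 1 2 3 .
qed

lemma parity: "even (z + n) \<Longrightarrow> (Top p ^^ n) e1 z = 0"
proof (induction n arbitrary: z)
  case 0 then show ?case by (auto simp: e1_def)
next
  case (Suc n)
  show ?case using Suc.prems Suc.IH[of "z-1"] Suc.IH[of "z+1"] by (auto simp: Top_def)
qed



definition W :: "(nat \<Rightarrow> real) \<Rightarrow> nat list \<Rightarrow> real" where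
  "W p xs = (\<Prod>i<length xs - 1. step_prob p (xs!i) (xs!Suc i))"

lemma W_snoc: "xs \<noteq> [] \<Longrightarrow> W p (xs @ [y]) = W p xs * step_prob p (xs ! (length xs - 1)) y"
proof -
  assume ne: "xs \<noteq> []"
  then obtain n where n: "length xs = Suc n" by (cases xs) auto
  have "W p (xs @ [y]) = (\<Prod>i<Suc n. step_prob p ((xs@[y])!i) ((xs@[y])!Suc i))"
    unfolding W_def using n by simp
  also have "\<dots> = (\<Prod>i<n. step_prob p ((xs@[y])!i) ((xs@[y])!Suc i)) * step_prob p (xs!n) y"
    using n by (simp add: nth_append)
  also have "(\<Prod>i<n. step_prob p ((xs@[y])!i) ((xs@[y])!Suc i)) = W p xs"
    unfolding W_def using n by (intro prod.cong) (auto simp: nth_append)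
  finally show ?thesis using n by simp
qed

lemma W_cons: "zs \<noteq> [] \<Longrightarrow> W p (x # zs) = step_prob p x (zs!0) * W p zs"
proof -
  assume ne: "zs \<noteq> []"
  then obtain n where n: "length zs = Suc n" by (cases zs) auto
  have "W p (x # zs) = (\<Prod>i<Suc n. step_prob p ((x#zs)!i) ((x#zs)!Suc i))"
    unfolding W_def using n by simp
  also have "\<dots> = step_prob p x (zs!0) * (\<Prod>i<n. step_prob p (zs!i) (zs!Suc i))"
    unfolding prod.lessThan_Suc_shift by simp
  finally show ?thesis unfolding W_def using n by simp
qed

definition PS :: "nat \<Rightarrow> nat \<Rightarrow> nat \<Rightarrow> nat list set" where
  "PS L n y = {xs. length xs = Suc n \<and> set xs \<subseteq> {1..L} \<and> xs!0 = 1 \<and> xs!n = y}"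

definition Q :: "(nat \<Rightarrow> real) \<Rightarrow> nat \<Rightarrow> nat \<Rightarrow> nat \<Rightarrow> real" where
  "Q p L n y = sum (W p) (PS L n y)"

lemma finite_PS: "finite (PS L n y)"
proof -
  have "PS L n y \<subseteq> {xs. set xs \<subseteq> {1..L} \<and> length xs = Suc n}" unfolding PS_def by auto
  then show ?thesis using finite_lists_length_eq[of "{1..L}" "Suc n"] finite_subset by blast
qed

lemma PS_Suc:
  assumes "y \<in> {1..L}"
  shows "PS L (Suc n) y = (\<Union>z\<in>{1..L}. (\<lambda>xs. xs @ [y]) ` PS L n z)"
proof
  show "PS L (Suc n) y \<subseteq> (\<Union>z\<in>{1..L}. (\<lambda>xs. xs @ [y]) ` PS L n z)"
  proof
    fix xs assume xs: "xs \<in> PS L (Suc n) y"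
    define ys where "ys = butlast xs"
    have l: "length xs = Suc (Suc n)" using xs unfolding PS_def by auto
    have ly: "length ys = Suc n" unfolding ys_def using l by simp
    have xe: "xs = ys @ [y]"
    proof -
      have "xs \<noteq> []" using l by auto
      then have "xs = butlast xs @ [last xs]" by simp
      moreover have "last xs = xs ! Suc n" using l last_conv_nth[of xs] by fastforce
      moreover have "xs ! Suc n = y" using xs unfolding PS_def by auto
      ultimately show ?thesis unfolding ys_def by simp
    qed
    have sy: "set ys \<subseteq> {1..L}" using xs xe unfolding PS_def by auto
    have y0: "ys!0 = 1" using xs xe ly unfolding PS_def by (simp add: nth_append)
    have zin: "ys!n \<in> {1..L}" using sy ly by (metis lessI nth_mem subsetD)
    have "ys \<in> PS L n (ys!n)" unfolding PS_def using ly sy y0 by simp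
    then show "xs \<in> (\<Union>z\<in>{1..L}. (\<lambda>xs. xs @ [y]) ` PS L n z)" using zin xe by blast
  qed
next
  show "(\<Union>z\<in>{1..L}. (\<lambda>xs. xs @ [y]) ` PS L n z) \<subseteq> PS L (Suc n) y"
    using assms unfolding PS_def by (auto simp: nth_append)
qed

lemma Q_Suc:
  assumes "y \<in> {1..L}"
  shows "Q p L (Suc n) y = (\<Sum>z\<in>{1..L}. Q p L n z * step_prob p z y)"
proof -
  have "Q p L (Suc n) y = (\<Sum>z\<in>{1..L}. sum (W p) ((\<lambda>xs. xs @ [y]) ` PS L n z))"
    unfolding Q_def PS_Suc[OF assms]
  proof (rule sum.UNION_disjoint)
    show "\<forall>i\<in>{1..L}. finite ((\<lambda>xs. xs @ [y]) ` PS L n i)" using finite_PS by auto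
    show "\<forall>i\<in>{1..L}. \<forall>j\<in>{1..L}. i \<noteq> j \<longrightarrow> (\<lambda>xs. xs @ [y]) ` PS L n i \<inter> (\<lambda>xs. xs @ [y]) ` PS L n j = {}"
      unfolding PS_def by auto
  qed simp
  also have "\<dots> = (\<Sum>z\<in>{1..L}. Q p L n z * step_prob p z y)"
  proof (rule sum.cong)
    fix z assume "z \<in> {1..L}"
    have "sum (W p) ((\<lambda>xs. xs @ [y]) ` PS L n z) = sum (\<lambda>xs. W p (xs @ [y])) (PS L n z)"
      by (rule sum.reindex_cong[where l="\<lambda>xs. xs @ [y]"]) (auto simp: inj_on_def)
    also have "\<dots> = sum (\<lambda>xs. W p xs * step_prob p z y) (PS L n z)"
    proof (rule sum.cong)
      fix xs assume "xs \<in> PS L n z"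
      then have "xs \<noteq> []" "xs ! (length xs - 1) = z" unfolding PS_def by auto
      then show "W p (xs @ [y]) = W p xs * step_prob p z y" using W_snoc by metis
    qed simp
    finally show "sum (W p) ((\<lambda>xs. xs @ [y]) ` PS L n z) = Q p L n z * step_prob p z y"
      unfolding Q_def by (simp add: sum_distrib_right)
  qed simp
  finally show ?thesis .
qed

lemma Q_0: "1 \<le> L \<Longrightarrow> Q p L 0 y = e1 y"
proof -
  assume L: "1 \<le> L"
  have "PS L 0 y = (if y = 1 then {[1]} else {})"
  proof (cases "y = 1")
    case True
    have "PS L 0 1 = {[1]}"
    proof (intro equalityI subsetI)
      fix xs assume "xs \<in> PS L 0 1"
      then have "length xs = 1" "xs!0 = 1" unfolding PS_def by auto
      then show "xs \<in> {[1]}" by (cases xs) auto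
    next
      fix xs assume "xs \<in> {[1::nat]}" then show "xs \<in> PS L 0 1" using L unfolding PS_def by auto
    qed
    then show ?thesis using True by simp
  next
    case False then show ?thesis unfolding PS_def by auto
  qed
  then show ?thesis unfolding Q_def e1_def W_def by simp
qed

lemma Q_zero: "Q p L n 0 = 0"
proof -
  have "PS L n 0 = {}"
  proof -
    { fix xs assume "xs \<in> PS L n 0"
      then have A: "length xs = Suc n" "set xs \<subseteq> {1..L}" "xs!n = 0" unfolding PS_def by auto
      then have "xs!n \<in> set xs" by (intro nth_mem) simp
      then have False using A by auto }
    then show ?thesis by blast
  qed
  then show ?thesis unfolding Q_def by simp
qed

lemma sum_step:
  assumes "1 \<le> y" "y \<le> L" "\<forall>z>L. u z = 0"
  shows "(\<Sum>z\<in>{1..L}. u z * step_prob p z y) = Top p u y"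
proof -
  have "(\<Sum>z\<in>{1..L}. u z * step_prob p z y)
      = (\<Sum>z\<in>{1..L}. (if z = y - 1 then u z * p z else 0) + (if z = Suc y then u z * (1 - p z) else 0))"
    using assms(1) by (intro sum.cong) (auto simp: step_prob_def)
  also have "\<dots> = (if y - 1 \<in> {1..L} then u (y-1) * p (y-1) else 0)
      + (if Suc y \<in> {1..L} then u (Suc y) * (1 - p (Suc y)) else 0)"
    by (simp add: sum.distrib)
  also have "\<dots> = Top p u y"
    using assms unfolding Top_def by auto
  finally show ?thesis .
qed

lemma Q_T: "n + 1 \<le> L \<Longrightarrow> y \<le> L \<Longrightarrow> Q p L n y = (Top p ^^ n) e1 y"
proof (induction n arbitrary: y)
  case 0 then show ?case using Q_0 by simp
next
  case (Suc n)
  show ?case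
  proof (cases "y = 0")
    case True then show ?thesis using Q_zero by (simp add: Top_def)
  next
    case False
    then have yL: "y \<in> {1..L}" using Suc.prems by auto
    have "Q p L (Suc n) y = (\<Sum>z\<in>{1..L}. (Top p ^^ n) e1 z * step_prob p z y)"
      unfolding Q_Suc[OF yL] using Suc.IH Suc.prems by (intro sum.cong) auto
    also have "\<dots> = Top p ((Top p ^^ n) e1) y"
    proof (rule sum_step)
      have s: "supp 1 e1" unfolding supp_def e1_def by auto
      show "\<forall>z>L. (Top p ^^ n) e1 z = 0" using supp_pow[OF s, where p=p and n=n] Suc.prems
        unfolding supp_def by auto
    qed (use yL in auto)
    finally show ?thesis by simp
  qed
qed

lemma first_return_Q:
  assumes p0: "p 0 = 1"
  shows "first_return p (Suc (Suc n)) = (1 - p 1) * Q p (n+2) n 1"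
proof -
  define B where "B = {ys. length ys = Suc n \<and> set ys \<subseteq> {1..n+2}}"
  have fB: "finite B" unfolding B_def using finite_lists_length_eq[of "{1..n+2}" "Suc n"]
    by (simp add: conj_commute)
  have RP: "return_paths (Suc (Suc n)) = (\<lambda>ys. 0 # ys @ [0]) ` B"
  proof (intro equalityI subsetI)
    fix xs assume xs: "xs \<in> return_paths (Suc (Suc n))"
    define ys where "ys = map (\<lambda>i. xs!(Suc i)) [0..<Suc n]"
    have l: "length xs = Suc (Suc (Suc n))" using xs unfolding return_paths_def by auto
    have "xs = 0 # ys @ [0]"
    proof (rule nth_equalityI)
      show "length xs = length (0 # ys @ [0])" using l unfolding ys_def by simp
      fix i assume "i < length xs"
      then have "i < Suc (Suc (Suc n))" using l by simp
      then consider "i = 0" | "i = Suc (Suc n)" | j where "i = Suc j" "j < Suc n"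
        by (cases i) (auto simp: less_Suc_eq)
      then show "xs ! i = (0 # ys @ [0]) ! i"
      proof cases
        case 1 then show ?thesis using xs unfolding return_paths_def by simp
      next
        case 2 then show ?thesis using xs unfolding return_paths_def ys_def by (simp add: nth_append)
      next
        case 3
        have "(0 # ys @ [0]) ! i = ys ! j" using 3 unfolding ys_def by (simp add: nth_append)
        also have "\<dots> = xs ! i" using 3 unfolding ys_def by (simp del: upt_Suc)
        finally show ?thesis by simp
      qed
    qed
    moreover have "ys \<in> B"
    proof -
      have "\<And>i. i < Suc n \<Longrightarrow> xs!(Suc i) \<in> {1..n+2}"
      proof -
        fix i assume i: "i < Suc n"
        have "xs!(Suc i) \<noteq> 0" using xs i unfolding return_paths_def by auto
        moreover have "xs!(Suc i) \<in> set xs" using l i by simp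
        ultimately show "xs!(Suc i) \<in> {1..n+2}" using xs unfolding return_paths_def by auto
      qed
      then show ?thesis unfolding B_def ys_def by auto
    qed
    ultimately show "xs \<in> (\<lambda>ys. 0 # ys @ [0]) ` B" by blast
  next
    fix xs assume "xs \<in> (\<lambda>ys. 0 # ys @ [0]) ` B"
    then obtain ys where ys: "ys \<in> B" "xs = 0 # ys @ [0]" by blast
    have l: "length ys = Suc n" and s: "set ys \<subseteq> {1..n+2}" using ys(1) unfolding B_def by auto
    have "\<forall>i. 0 < i \<and> i < Suc (Suc n) \<longrightarrow> xs ! i \<noteq> 0"
    proof (intro allI impI)
      fix i assume i: "0 < i \<and> i < Suc (Suc n)"
      then obtain j where j: "i = Suc j" "j < Suc n" by (cases i) auto
      then have "xs ! i = ys ! j" using ys(2) l by (simp add: nth_append)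
      moreover have "ys ! j \<in> set ys" using j l by simp
      ultimately show "xs ! i \<noteq> 0" using s by auto
    qed
    moreover have "length xs = Suc (Suc (Suc n))" using ys(2) l by simp
    moreover have "set xs \<subseteq> {0..Suc (Suc n)}" using ys(2) s by auto
    moreover have "xs ! 0 = 0" using ys(2) by simp
    moreover have "xs ! Suc (Suc n) = 0" using ys(2) l by (simp add: nth_append)
    ultimately show "xs \<in> return_paths (Suc (Suc n))"
      unfolding return_paths_def by blast
  qed
  have wt: "(\<Prod>i<Suc (Suc n). step_prob p ((0 # ys @ [0]) ! i) ((0 # ys @ [0]) ! Suc i))
      = (if ys!0 = 1 \<and> ys!n = 1 then (1 - p 1) * W p ys else 0)" if "ys \<in> B" for ys
  proof -
    have l: "length ys = Suc n" using that unfolding B_def by auto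
    have "(\<Prod>i<Suc (Suc n). step_prob p ((0 # ys @ [0]) ! i) ((0 # ys @ [0]) ! Suc i)) = W p (0 # ys @ [0])"
      unfolding W_def using l by simp
    also have "\<dots> = step_prob p 0 (ys!0) * (W p ys * step_prob p (ys!n) 0)"
      using l W_snoc[of ys p 0] by (cases ys) (simp_all add: W_cons nth_append)
    also have "\<dots> = (if ys!0 = 1 \<and> ys!n = 1 then (1 - p 1) * W p ys else 0)"
      using p0 by (simp add: step_prob_def)
    finally show ?thesis .
  qed
  have "first_return p (Suc (Suc n)) = (\<Sum>ys\<in>B. (if ys!0 = 1 \<and> ys!n = 1 then (1 - p 1) * W p ys else 0))"
    unfolding first_return_def RP
  proof (rule sum.reindex_cong[where l="\<lambda>ys. 0 # ys @ [0]"])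
    show "inj_on (\<lambda>ys. 0 # ys @ [0]) B" by (auto simp: inj_on_def)
  next
    fix ys assume "ys \<in> B"
    then show "(\<Prod>i<Suc (Suc n). step_prob p ((0 # ys @ [0]) ! i) ((0 # ys @ [0]) ! Suc i))
      = (if ys!0 = 1 \<and> ys!n = 1 then (1 - p 1) * W p ys else 0)" by (rule wt)
  qed simp
  also have "\<dots> = (\<Sum>ys\<in>{ys\<in>B. ys!0 = 1 \<and> ys!n = 1}. (1 - p 1) * W p ys)"
    using fB by (simp only: sum.inter_filter)
  also have "{ys\<in>B. ys!0 = 1 \<and> ys!n = 1} = PS (n+2) n 1" unfolding B_def PS_def by auto
  finally show ?thesis unfolding Q_def by (simp add: sum_distrib_left)
qed

lemma first_return_g:
  assumes "p 0 = 1"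
  shows "first_return p (Suc (Suc n)) = (1 - p 1) * (Top p ^^ n) e1 1"
  using first_return_Q[where p=p and n=n, OF assms] Q_T[of n "n+2" 1 p] by simp



lemma even_sum:
  fixes G :: "nat \<Rightarrow> real"
  assumes "\<And>t. odd t \<Longrightarrow> G t = 0"
  shows "sum G {0..2*N} = sum (\<lambda>s. G (2 * s)) {0..N}"
proof (induction N)
  case 0 then show ?case by simp
next
  case (Suc N)
  have e: "2 * Suc N = Suc (Suc (2*N))" by simp
  have "(\<Sum>t=0..(2*Suc N). G t) = (\<Sum>t=0..(2*N). G t) + G (Suc (2*N)) + G (2 * Suc N)"
    unfolding e by (simp add: sum.atLeast0_atMost_Suc)
  also have "G (Suc (2*N)) = 0" using assms by simp
  finally show ?case using Suc.IH by (simp add: sum.atLeast0_atMost_Suc)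
qed

lemma sym_sum:
  fixes h :: "nat \<Rightarrow> real"
  assumes "\<And>r. r \<le> j \<Longrightarrow> 2 * h j \<le> h (j - r) + h (j + r)"
  shows "(2*j+1) * h j \<le> (\<Sum>s=0..(2*j). h s)"
proof -
  have rev: "(\<Sum>s=0..(2*j). h s) = (\<Sum>s=0..(2*j). h (2*j - s))"
    using sum.atLeastAtMost_rev[of h 0 "2*j"] by simp
  have "2 * ((2*j+1) * h j) = (\<Sum>s=0..(2*j). 2 * h j)" by simp
  also have "\<dots> \<le> (\<Sum>s=0..(2*j). h s + h (2*j - s))"
  proof (rule sum_mono)
    fix s assume s: "s \<in> {0..2*j}"
    show "2 * h j \<le> h s + h (2*j - s)"
    proof (cases "s \<le> j")
      case True
      have e: "j - (j - s) = s" "j + (j - s) = 2*j - s" using True by auto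
      have "2 * h j \<le> h (j - (j-s)) + h (j + (j-s))" by (rule assms) simp
      from this[unfolded e] show ?thesis by linarith
    next
      case False
      have e: "j - (s - j) = 2*j - s" "j + (s - j) = s" using False s by auto
      have "2 * h j \<le> h (j - (s-j)) + h (j + (s-j))" by (rule assms) (use s in auto)
      from this[unfolded e] show ?thesis by linarith
    qed
  qed
  also have "\<dots> = 2 * (\<Sum>s=0..(2*j). h s)" using rev by (simp add: sum.distrib)
  finally show ?thesis by (simp add: add.commute)
qed



theorem lemma5p1:
  fixes p R :: "nat \<Rightarrow> real" and \<delta> \<epsilon> :: real and k m :: nat
  assumes delta: "\<delta> \<ge> -1"
    and p0: "p 0 = 1"
    and px: "\<And>x. x \<ge> 1 \<Longrightarrow> p x = 1/2 * (1 - \<delta> / (2 * real x) + R x / 2)"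
    and Ro: "(\<lambda>x. real x * R x) \<longlonglongrightarrow> 0"
    and eps: "\<epsilon> > 0"
    and bounds: "\<And>x. x \<ge> 1 \<Longrightarrow> \<epsilon> \<le> p x \<and> p x \<le> 1 - \<epsilon>"
    and km: "even k" "even m" "0 < k" "k < m"
  shows "first_return p m \<le> (first_return p (m + k) + first_return p (m - k)) / 2
    \<and> first_return p m \<le> A_avg p (m - k) (m + k)"
proof -
  have hp: "\<forall>x\<ge>1. 0 < p x \<and> p x < 1" using bounds eps by force
  define q where "q = 1 - p 1"
  have q: "q \<ge> 0" using hp unfolding q_def by force
  define g where "g n = (Top p ^^ n) e1 1" for n
  have f: "first_return p (Suc (Suc n)) = q * g n" for n
    unfolding q_def g_def using first_return_g[where p=p and n=n, OF p0] .
  obtain j where j: "k = 2 * j" using km(1) by blast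
  obtain a where a: "m = Suc (Suc (2 * a))"
  proof -
    obtain b where b: "m = 2 * b" using km(2) by blast
    have "b \<ge> 1" using b km by simp
    then have "m = Suc (Suc (2 * (b - 1)))" using b by simp
    then show ?thesis using that by blast
  qed
  have ja: "j \<le> a" "1 \<le> j" using j a km by auto
  have fm: "first_return p m = q * g (2*a)" using a f by simp
  have fp: "first_return p (m + k) = q * g (2*a + 2*j)"
    using f[of "2*a+2*j"] a j by simp
  have fmk: "first_return p (m - k) = q * g (2*a - 2*j)"
  proof -
    have "m - k = Suc (Suc (2*a - 2*j))" using a j ja by simp
    then show ?thesis using f by simp
  qed
  have conv: "2 * g (2*a) \<le> g (2*a - 2*j') + g (2*a + 2*j')" if "j' \<le> a" for j'
    unfolding g_def using g_conv[OF hp that] .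
  have part1: "first_return p m \<le> (first_return p (m + k) + first_return p (m - k)) / 2"
  proof -
    have "2 * (q * g (2*a)) \<le> q * g (2*a + 2*j) + q * g (2*a - 2*j)"
      using mult_left_mono[OF conv[OF ja(1)] q] by (simp add: algebra_simps)
    then show ?thesis unfolding fm fp fmk by simp
  qed
  define c where "c = a - j"
  have c2: "2*a - 2*j = 2*c" "2*a + 2*j = 2*c + 4*j" "2*a = 2*c + 2*j"
    using ja unfolding c_def by auto
  have sumf: "(\<Sum>i=m-k..m+k. first_return p i) = q * (\<Sum>s=0..(2*j). g (2 * s + 2*c))"
  proof -
    have mk: "m - k = 2*c + 2" "m + k = 2*c + 4*j + 2" using a j ja unfolding c_def by auto
    have "(\<Sum>i=m-k..m+k. first_return p i) = (\<Sum>i=2*c..2*c+4*j. first_return p (i + 2))"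
      unfolding mk by (rule sum.shift_bounds_cl_nat_ivl)
    also have "\<dots> = (\<Sum>i=2*c..2*c+4*j. q * g i)"
    proof (rule sum.cong)
      fix i show "first_return p (i + 2) = q * g i" using f[of i] by (simp only: add_2_eq_Suc')
    qed (rule refl)
    also have "\<dots> = q * (\<Sum>i=2*c..2*c+4*j. g i)" by (simp only: sum_distrib_left)
    also have "(\<Sum>i=2*c..2*c+4*j. g i) = (\<Sum>i=0..4*j. g (i + 2*c))"
      using sum.shift_bounds_cl_nat_ivl[of g 0 "2*c" "4*j"] by (simp add: ac_simps)
    also have "\<dots> = (\<Sum>i=0..2*(2*j). g (i + 2*c))" by simp
    also have "\<dots> = (\<Sum>s=0..(2*j). g (2 * s + 2*c))"
    proof (rule even_sum)
      fix t :: nat assume "odd t"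
      then have "even (1 + (t + 2*c))" by simp
      then show "g (t + 2*c) = 0" unfolding g_def by (rule parity)
    qed
    finally show ?thesis .
  qed
  have hineq: "2 * g (2 * j + 2 * c) \<le> g (2 * (j - r) + 2 * c) + g (2 * (j + r) + 2 * c)"
    if r: "r \<le> j" for r
  proof -
    have e: "2 * (j - r) + 2 * c = 2*a - 2*r" "2 * (j + r) + 2*c = 2*a + 2*r" "2 * j + 2 * c = 2 * a"
      using r ja unfolding c_def by auto
    show ?thesis unfolding e using conv[of r] r ja by simp
  qed
  have symm: "(2 * real j + 1) * g (2 * j + 2*c) \<le> (\<Sum>s=0..(2*j). g (2 * s + 2*c))"
    using sym_sum[where h="\<lambda>s. g (2 * s + 2*c)" and j=j] hineq by simp
  have part2: "first_return p m \<le> A_avg p (m - k) (m + k)"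
  proof -
    have den: "real (m + k) - real (m - k) + 2 = 2 * (2 * real j + 1)"
      using km j by (simp add: of_nat_diff)
    have "A_avg p (m - k) (m + k) = q * (\<Sum>s=0..(2*j). g (2 * s + 2*c)) / (2 * real j + 1)"
      unfolding A_avg_def den sumf by (simp add: field_simps)
    moreover have "q * g (2*a) * (2 * real j + 1) \<le> q * (\<Sum>s=0..(2*j). g (2 * s + 2*c))"
      using mult_left_mono[OF symm q] c2 by (simp add: algebra_simps)
    ultimately show ?thesis unfolding fm by (simp add: pos_le_divide_eq)
  qed
  show ?thesis using part1 part2 by blast
qed


end
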